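(* Every finite nonempty left-commutative semigroup, i.e. one satisfying $xya=yxa$ for all $x,y,a$, is $K$-thin.
   Context: For a finite nonempty semigroup $S$, the minimal ideal $K(S)$ is the intersection of all nonempty two-sided ideals of $S$. A Rees matrix semigroup $\mathcal{M}(H;I,J;p)$, for sets $I,J$, a group $H$ and a function $p\colon J\times I\to H$, is the set $I\times H\times J$ with product $(i,h,j)(i',h',j')=(i,h\,p(j,i')\,h',j')$. It is known that $K(S)$ is always isomorphic to such a Rees matrix semigroup with $H$ a finite group and $p$ normalized (i.e. $p(j_0,i)=e_H$ and $p(j,i_0)=e_H$ for some fixed $i_0\in I$, $j_0\in J$ and all $i,j$). $S$ is called $K$-thin if $K(S)$ has such a normalized Rees matrix structure with $|I|=1$ or $|J|=1$; equivalently, $K(S)$ is left-simple or right-simple. *)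

theory Defs
  imports Main
begin

text \<open>A finite nonempty semigroup is modelled as a type of class
  semigroup_mult and finite; the semigroup is the whole type (UNIV,
  which is nonempty since HOL types are nonempty).\<close>

definition two_sided_ideal :: "'a::semigroup_mult set \<Rightarrow> bool" where
  "two_sided_ideal I \<longleftrightarrow> I \<noteq> {} \<and> (\<forall>s x. x \<in> I \<longrightarrow> s * x \<in> I \<and> x * s \<in> I)"

definition minimal_ideal :: "'a::semigroup_mult set" where
  "minimal_ideal = \<Inter> {I. two_sided_ideal I}"

definition left_simple :: "'a::semigroup_mult set \<Rightarrow> bool" where
  "left_simple T \<longleftrightarrow> T \<noteq> {} \<and>
     (\<forall>L. L \<subseteq> T \<and> L \<noteq> {} \<and> (\<forall>t\<in>T. \<forall>l\<in>L. t * l \<in> L) \<longrightarrow> L = T)"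

definition right_simple :: "'a::semigroup_mult set \<Rightarrow> bool" where
  "right_simple T \<longleftrightarrow> T \<noteq> {} \<and>
     (\<forall>R. R \<subseteq> T \<and> R \<noteq> {} \<and> (\<forall>t\<in>T. \<forall>r\<in>R. r * t \<in> R) \<longrightarrow> R = T)"

definition K_thin :: "'a::semigroup_mult itself \<Rightarrow> bool" where
  "K_thin (_ :: 'a itself) \<longleftrightarrow>
     left_simple (minimal_ideal :: 'a set) \<or> right_simple (minimal_ideal :: 'a set)"

end

theory Submission
  imports Defs
begin

lemma K_nonempty: "(minimal_ideal :: 'a::{semigroup_mult, finite} set) \<noteq> {}"
proof -
  have U: "two_sided_ideal (UNIV :: 'a set)" by (simp add: two_sided_ideal_def)
  have "\<exists>M::'a set. two_sided_ideal M \<and> (\<forall>I. two_sided_ideal I \<longrightarrow> card M \<le> card (I::'a set))"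
    by (rule ex_has_least_nat[where P=two_sided_ideal and m=card, OF U])
  then obtain M :: "'a set" where M: "two_sided_ideal M"
    and Mmin: "\<And>I::'a set. two_sided_ideal I \<Longrightarrow> card M \<le> card I"
    by blast
  have "M \<subseteq> I" if I: "two_sided_ideal I" for I :: "'a set"
  proof -
    obtain m where m: "m \<in> M" using M unfolding two_sided_ideal_def by auto
    obtain i where i: "i \<in> I" using I unfolding two_sided_ideal_def by auto
    have "m * i \<in> M" using M m unfolding two_sided_ideal_def by simp
    moreover have "m * i \<in> I" using I i unfolding two_sided_ideal_def by simp
    ultimately have "M \<inter> I \<noteq> {}" by auto
    hence "two_sided_ideal (M \<inter> I)" using M I unfolding two_sided_ideal_def by simp
    hence "card M \<le> card (M \<inter> I)" by (rule Mmin)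
    hence "M \<inter> I = M" by (rule card_seteq[OF finite Int_lower1])
    thus ?thesis by auto
  qed
  hence "M \<subseteq> minimal_ideal" unfolding minimal_ideal_def by auto
  moreover have "M \<noteq> {}" using M unfolding two_sided_ideal_def by simp
  ultimately show ?thesis by auto
qed

lemma K_closed: "k \<in> (minimal_ideal :: 'a::semigroup_mult set) \<Longrightarrow> s * k \<in> minimal_ideal \<and> k * s \<in> minimal_ideal"
  unfolding minimal_ideal_def two_sided_ideal_def by blast

theorem proposition7p8:
  assumes "\<forall>x y a :: 'a::{semigroup_mult, finite}. x * y * a = y * x * a"
  shows "K_thin TYPE('a)"
proof -
  let ?K = "minimal_ideal :: 'a set"
  have ne: "?K \<noteq> {}" by (rule K_nonempty)
  have "right_simple ?K"
    unfolding right_simple_def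
  proof (intro conjI allI impI)
    show "?K \<noteq> {}" by (rule ne)
    fix R assume R: "R \<subseteq> ?K \<and> R \<noteq> {} \<and> (\<forall>t\<in>?K. \<forall>r\<in>R. r * t \<in> R)"
    then obtain r where r: "r \<in> R" by blast
    let ?J = "(\<lambda>k. r * k) ` ?K"
    have "two_sided_ideal ?J"
      unfolding two_sided_ideal_def
    proof (intro conjI allI impI)
      show "?J \<noteq> {}" using ne by blast
      fix s x assume "x \<in> ?J"
      then obtain k where k: "k \<in> ?K" "x = r * k" by blast
      have "s * x = s * r * k" using k(2) by (simp add: mult.assoc)
      also have "\<dots> = r * s * k" using assms by blast
      also have "\<dots> = r * (s * k)" by (simp add: mult.assoc)
      finally have "s * x = r * (s * k)" .
      thus "s * x \<in> ?J" using K_closed[OF k(1)] by blast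
      have "x * s = r * (k * s)" using k(2) by (simp add: mult.assoc)
      thus "x * s \<in> ?J" using K_closed[OF k(1)] by blast
    qed
    hence "?K \<subseteq> ?J" unfolding minimal_ideal_def by blast
    also have "?J \<subseteq> R" using R r by blast
    finally show "R = ?K" using R by blast
  qed
  thus ?thesis unfolding K_thin_def by blast
qed

end
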